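(* Let $G$ be a finite nonabelian group such that $\{w(G): d\ge1,\ w\in F_d\}=\{\{1\},Z(G),G\}$, i.e. the only word images of $G$ are $\{1\}$, $Z(G)$ and $G$. Then $G$ is a special $p$-group for some prime $p$.
   Context: $F_d$ is the free group on $d$ letters; for $w\in F_d$, $w(G)$ is the image of the word map $G^d\to G$ given by evaluating $w$. A special $p$-group is a finite $p$-group whose center, derived subgroup and Frattini subgroup coincide and are elementary abelian. *)

theory Defs
  imports "HOL-Algebra.Algebra"
begin

text \<open>Words in the free group on letters indexed by naturals: a word is a list of
  letters (i, e), where e = True means the inverse of generator i.
  An element of the free group F_d is represented by (any) word in letters i < d.\<close>

definition letters_below :: "nat \<Rightarrow> (nat \<times> bool) list \<Rightarrow> bool" where
  "letters_below d w \<longleftrightarrow> (\<forall>x\<in>set w. fst x < d)"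

fun word_eval :: "('a, 'b) monoid_scheme \<Rightarrow> (nat \<times> bool) list \<Rightarrow> (nat \<Rightarrow> 'a) \<Rightarrow> 'a" where
  "word_eval G [] g = \<one>\<^bsub>G\<^esub>"
| "word_eval G ((i, e) # w) g =
     (if e then inv\<^bsub>G\<^esub> (g i) else g i) \<otimes>\<^bsub>G\<^esub> word_eval G w g"

definition word_image :: "('a, 'b) monoid_scheme \<Rightarrow> nat \<Rightarrow> (nat \<times> bool) list \<Rightarrow> 'a set" where
  "word_image G d w = {word_eval G w g | g. \<forall>i<d. g i \<in> carrier G}"

definition word_images :: "('a, 'b) monoid_scheme \<Rightarrow> 'a set set" where
  "word_images G = {word_image G d w | d w. 1 \<le> d \<and> letters_below d w}"

definition center :: "('a, 'b) monoid_scheme \<Rightarrow> 'a set" where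
  "center G = {z \<in> carrier G. \<forall>x\<in>carrier G. z \<otimes>\<^bsub>G\<^esub> x = x \<otimes>\<^bsub>G\<^esub> z}"

definition maximal_subgroup :: "('a, 'b) monoid_scheme \<Rightarrow> 'a set \<Rightarrow> bool" where
  "maximal_subgroup G H \<longleftrightarrow> subgroup H G \<and> H \<noteq> carrier G \<and>
     (\<forall>K. subgroup K G \<and> H \<subseteq> K \<longrightarrow> K = H \<or> K = carrier G)"

text \<open>Frattini subgroup: intersection of all maximal subgroups (G itself if there are none).\<close>
definition frattini :: "('a, 'b) monoid_scheme \<Rightarrow> 'a set" where
  "frattini G = carrier G \<inter> \<Inter>{H. maximal_subgroup G H}"

definition elementary_abelian_p :: "('a, 'b) monoid_scheme \<Rightarrow> nat \<Rightarrow> 'a set \<Rightarrow> bool" where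
  "elementary_abelian_p G p H \<longleftrightarrow> subgroup H G \<and> comm_group (G\<lparr>carrier := H\<rparr>) \<and>
     (\<forall>x\<in>H. x [^]\<^bsub>G\<^esub> p = \<one>\<^bsub>G\<^esub>)"

definition p_group :: "('a, 'b) monoid_scheme \<Rightarrow> nat \<Rightarrow> bool" where
  "p_group G p \<longleftrightarrow> group G \<and> finite (carrier G) \<and> (\<exists>n. card (carrier G) = p ^ n)"

definition special_p_group :: "('a, 'b) monoid_scheme \<Rightarrow> nat \<Rightarrow> bool" where
  "special_p_group G p \<longleftrightarrow> Factorial_Ring.prime p \<and> p_group G p \<and>
     center G = derived G (carrier G) \<and> derived G (carrier G) = frattini G \<and>
     elementary_abelian_p G p (center G)"

end

theory Submission
  imports Defs "HOL-Computational_Algebra.Primes"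
begin


lemma group_action_restrict:
  fixes G (structure)
  assumes "group_action G E \<phi>" "E' \<subseteq> E"
    and inv: "\<And>g x. g \<in> carrier G \<Longrightarrow> x \<in> E' \<Longrightarrow> \<phi> g x \<in> E'"
  shows "group_action G E' (\<lambda>g. restrict (\<phi> g) E')"
proof -
  interpret A: group_action G E \<phi> by fact
  have grp: "group G" using A.group_hom group_hom.axioms(1) by blast
  interpret group G by (rule grp)
  have bij: "restrict (\<phi> g) E' \<in> Bij E'" if g: "g \<in> carrier G" for g
  proof -
    have inj: "inj_on (\<phi> g) E'" using A.inj_prop[OF g] assms(2) inj_on_subset by blast
    have "\<phi> g ` E' = E'"
    proof
      show "\<phi> g ` E' \<subseteq> E'" using inv g by blast
      show "E' \<subseteq> \<phi> g ` E'"
      proof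
        fix y assume y: "y \<in> E'"
        have x: "\<phi> (inv g) y \<in> E'" using inv y g by simp
        have "\<phi> g (\<phi> (inv g) y) = \<phi> (g \<otimes> inv g) y"
          using A.composition_rule[of y g "inv g"] y g assms(2) by auto
        also have "\<dots> = y" using g y assms(2) A.id_eq_one[symmetric]
          by (metis r_inv restrict_apply' subsetD)
        finally show "y \<in> \<phi> g ` E'" using x by (metis image_eqI)
      qed
    qed
    then have "bij_betw (\<phi> g) E' E'" using inj by (simp add: bij_betw_def)
    then show ?thesis by (simp add: Bij_def bij_betw_restrict_eq)
  qed
  have hom: "(\<lambda>g. restrict (\<phi> g) E') \<in> hom G (BijGroup E')"
  proof (rule homI)
    show "restrict (\<phi> g) E' \<in> carrier (BijGroup E')" if "g \<in> carrier G" for g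
      using bij[OF that] by (simp add: BijGroup_def)
    show "restrict (\<phi> (g \<otimes> h)) E' = restrict (\<phi> g) E' \<otimes>\<^bsub>BijGroup E'\<^esub> restrict (\<phi> h) E'"
      if g: "g \<in> carrier G" and h: "h \<in> carrier G" for g h
    proof -
      have "restrict (\<phi> g) E' \<otimes>\<^bsub>BijGroup E'\<^esub> restrict (\<phi> h) E'
           = compose E' (restrict (\<phi> g) E') (restrict (\<phi> h) E')"
        using bij[OF g] bij[OF h] by (simp add: BijGroup_def)
      also have "\<dots> = restrict (\<phi> (g \<otimes> h)) E'"
        unfolding compose_def
        using A.composition_rule g h assms(2) inv by (auto intro!: restrict_ext)
      finally show ?thesis by simp
    qed
  qed
  show ?thesis
    unfolding group_action_def group_hom_def group_hom_axioms_def
    using grp group_BijGroup hom by blast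
qed

lemma fixed_points_mod:
  fixes G (structure)
  assumes "group_action G E \<phi>" "finite E" "card (carrier G) = p ^ n" "Factorial_Ring.prime p"
  shows "card E mod p = card {x\<in>E. \<forall>g\<in>carrier G. \<phi> g x = x} mod p"
proof -
  interpret A: group_action G E \<phi> by fact
  have one: "\<one> \<in> carrier G"
    using A.group_hom group_hom.axioms(1) monoid.one_closed group.is_monoid by blast
  define Orb where "Orb = orbits G E \<phi>"
  define F where "F = {x\<in>E. \<forall>g\<in>carrier G. \<phi> g x = x}"
  have finO: "finite Orb" unfolding Orb_def orbits_def
    using assms(2) by simp
  have "card E = (\<Sum>orb\<in>Orb. card orb)"
    using A.disjoint_sum[OF assms(2), of "\<lambda>_. 1::nat"] unfolding Orb_def by simp
  have orbcard: "\<exists>k. card orb = p ^ k" if orbin: "orb \<in> Orb" for orb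
  proof -
    obtain x where x: "x \<in> E" "orb = orbit G \<phi> x" using orbin unfolding Orb_def orbits_def by blast
    have "card orb * card (stabilizer G \<phi> x) = p ^ n"
      using A.orbit_stabilizer_theorem[OF x(1)] x(2) assms(3) by (simp add: order_def)
    then have "card orb dvd p ^ n" by (metis dvd_triv_left)
    then show ?thesis using assms(4) by (auto simp: divides_primepow_nat)
  qed
  have p1: "p > 1" using assms(4) prime_gt_1_nat by blast
  have modc: "card orb mod p = (if card orb = 1 then 1 else 0)" if orbin: "orb \<in> Orb" for orb
  proof -
    obtain k where k: "card orb = p ^ k" using orbcard[OF orbin] by blast
    show ?thesis
    proof (cases k)
      case 0 then show ?thesis using k p1 by simp
    next
      case (Suc j) then show ?thesis using k p1 by simp
    qed
  qed
  have "card E mod p = (\<Sum>orb\<in>Orb. card orb mod p) mod p"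
    using \<open>card E = _\<close> by (simp add: mod_sum_eq)
  also have "(\<Sum>orb\<in>Orb. card orb mod p) = (\<Sum>orb\<in>Orb. if card orb = 1 then 1 else 0)"
    using modc by (rule sum.cong[OF refl])
  also have "\<dots> = card {orb\<in>Orb. card orb = 1}"
    using finO by (simp add: sum.If_cases Int_def)
  also have "card {orb\<in>Orb. card orb = 1} = card F"
  proof -
    have orb_fix: "(orbit G \<phi> x = {x}) \<longleftrightarrow> (\<forall>g\<in>carrier G. \<phi> g x = x)" if "x \<in> E" for x
      unfolding orbit_def using one by (auto; metis)
    have "bij_betw (\<lambda>x. orbit G \<phi> x) F {orb\<in>Orb. card orb = 1}"
    proof (rule bij_betw_imageI)
      show "inj_on (orbit G \<phi>) F"
      proof (rule inj_onI)
        fix x y assume xy: "x \<in> F" "y \<in> F" "orbit G \<phi> x = orbit G \<phi> y"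
        then have "{x} = {y}" using orb_fix unfolding F_def by auto
        then show "x = y" by simp
      qed
      show "orbit G \<phi> ` F = {orb \<in> Orb. card orb = 1}"
      proof
        show "orbit G \<phi> ` F \<subseteq> {orb \<in> Orb. card orb = 1}"
        proof
          fix o' assume "o' \<in> orbit G \<phi> ` F"
          then obtain x where x: "x \<in> F" "o' = orbit G \<phi> x" by blast
          then have "o' = {x}" "x \<in> E" using orb_fix unfolding F_def by auto
          then show "o' \<in> {orb \<in> Orb. card orb = 1}"
            using x unfolding Orb_def orbits_def by auto
        qed
        show "{orb \<in> Orb. card orb = 1} \<subseteq> orbit G \<phi> ` F"
        proof
          fix orb assume "orb \<in> {orb \<in> Orb. card orb = 1}"
          then obtain x where x: "x \<in> E" "orb = orbit G \<phi> x" "card orb = 1"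
            unfolding Orb_def orbits_def by blast
          have "x \<in> orb" using A.orbit_refl x by simp
          then have "orb = {x}" using x(3) by (metis card_1_singletonE singletonD)
          then show "orb \<in> orbit G \<phi> ` F" using orb_fix x unfolding F_def by auto
        qed
      qed
    qed
    then show ?thesis by (metis bij_betw_same_card)
  qed
  finally show ?thesis unfolding F_def .
qed



context group begin

lemma fin_subgroupI:
  assumes fin: "finite (carrier G)" and S: "S \<subseteq> carrier G" "\<one> \<in> S"
    "\<And>x y. x \<in> S \<Longrightarrow> y \<in> S \<Longrightarrow> x \<otimes> y \<in> S"
  shows "subgroup S G"
proof (rule subgroupI)
  show "S \<subseteq> carrier G" "S \<noteq> {}" using S by auto
  show "a \<otimes> b \<in> S" if "a \<in> S" "b \<in> S" for a b using S that by blast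
  show "inv a \<in> S" if a: "a \<in> S" for a
  proof -
    have ac: "a \<in> carrier G" using a S by auto
    have pw: "a [^] (n::nat) \<in> S" for n by (induction n) (simp_all add: S a)
    have o: "ord a \<ge> 1" using ord_ge_1[OF fin ac] .
    have "a [^] (ord a - 1) \<otimes> a = a [^] (Suc (ord a - 1))" by simp
    also have "Suc (ord a - 1) = ord a" using o by simp
    finally have "a [^] (ord a - 1) \<otimes> a = \<one>" using ac by simp
    then have "inv a = a [^] (ord a - 1)" using inv_equality ac by simp
    then show ?thesis using pw by simp
  qed
qed

lemma conj_rcos:
  assumes H: "subgroup H G" and h: "h \<in> H" and g: "g \<in> carrier G"
  shows "h <# (H #> g) #> inv h = H #> (g \<otimes> inv h)"
proof -
  have hc: "h \<in> carrier G" using subgroup.mem_carrier[OF H h] .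
  have Hc: "H \<subseteq> carrier G" using H subgroup.subset by blast
  have "h <# (H #> g) = (h <# H) #> g" using coset_assoc hc g Hc by blast
  also have "h <# H = H" using coset_join3 hc H h by blast
  finally show ?thesis using coset_mult_assoc Hc g hc by simp
qed

lemma normalizer_growth:
  assumes fin: "finite (carrier G)" and p: "Factorial_Ring.prime p"
    and cardG: "card (carrier G) = p ^ n"
    and H: "subgroup H G" and Hne: "H \<noteq> carrier G"
  shows "\<exists>g\<in>carrier G. g \<notin> H \<and> (\<forall>y\<in>H. g \<otimes> y \<otimes> inv g \<in> H)"
proof -
  define \<phi> where "\<phi> = (\<lambda>g. restrict (\<lambda>S. g <# S #> (inv g)) {S. S \<subseteq> carrier G})"
  have Hc: "H \<subseteq> carrier G" using H subgroup.subset by blast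
  have act: "group_action (G\<lparr>carrier := H\<rparr>) {T. T \<subseteq> carrier G} \<phi>"
    unfolding \<phi>_def using group_action.induced_action[OF action_by_conjugation_on_power_set H] .
  have phi: "\<phi> h (H #> g) = H #> (g \<otimes> inv h)" if "h \<in> H" "g \<in> carrier G" for h g
    using conj_rcos[OF H that] that Hc unfolding \<phi>_def by (simp add: r_coset_subset_G)
  have E'sub: "rcosets H \<subseteq> {T. T \<subseteq> carrier G}" using rcosets_subset_PowG[OF H] by auto
  have rc: "T \<in> rcosets H \<longleftrightarrow> (\<exists>g\<in>carrier G. T = H #> g)" for T
    unfolding RCOSETS_def by auto
  have inv': "\<phi> h T \<in> rcosets H" if hh: "h \<in> carrier (G\<lparr>carrier := H\<rparr>)" and TT: "T \<in> rcosets H" for h T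
  proof -
    obtain g where g: "g \<in> carrier G" "T = H #> g" using TT rc by blast
    have hH: "h \<in> H" using hh by simp
    then have "inv h \<in> carrier G" using Hc by auto
    then show ?thesis using phi[OF hH g(1)] g rc hH Hc by auto
  qed
  have act2: "group_action (G\<lparr>carrier := H\<rparr>) (rcosets H) (\<lambda>h. restrict (\<phi> h) (rcosets H))"
    by (rule group_action_restrict[OF act E'sub inv'])
  have finE: "finite (rcosets H)" using finite_subset[OF rcosets_subset_PowG[OF H]] fin by simp
  have lag: "card (rcosets H) * card H = p ^ n"
    using lagrange[OF H] cardG by (simp add: order_def)
  have cardH: "\<exists>m. card H = p ^ m"
    using lag p by (metis divides_primepow_nat dvd_triv_right)
  then obtain m where m: "card H = p ^ m" by blast
  have "card (rcosets H) dvd p ^ n" using lag by (metis dvd_triv_left)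
  then obtain j where j: "card (rcosets H) = p ^ j" using p by (auto simp: divides_primepow_nat)
  have "j \<noteq> 0"
  proof
    assume "j = 0"
    then have "card H = card (carrier G)" using lag j cardG by simp
    then have "H = carrier G" using Hc fin card_subset_eq by blast
    then show False using Hne by simp
  qed
  then have "card (rcosets H) mod p = 0" using j by simp
  define F where "F = {T\<in>rcosets H. \<forall>h\<in>H. restrict (\<phi> h) (rcosets H) T = T}"
  have "card (rcosets H) mod p = card F mod p"
    using fixed_points_mod[OF act2 finE _ p, of m] m unfolding F_def by simp
  then have Fmod: "card F mod p = 0" using \<open>card (rcosets H) mod p = 0\<close> by simp
  have HF: "H \<in> F"
  proof -
    have HR: "H \<in> rcosets H" using subgroup.subgroup_in_rcosets[OF H is_group] .
    have "\<phi> h H = H" if "h \<in> H" for h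
    proof -
      have "\<phi> h (H #> \<one>) = H #> (\<one> \<otimes> inv h)" using phi[OF that one_closed] by simp
      moreover have "inv h \<in> H" using subgroup.m_inv_closed[OF H that] .
      ultimately show ?thesis using Hc that coset_join2[OF _ H] by (simp add: subsetD)
    qed
    then show ?thesis using HR unfolding F_def by simp
  qed
  have finF: "finite F" using finE unfolding F_def by simp
  have "\<exists>T\<in>F. T \<noteq> H"
  proof (rule ccontr)
    assume "\<not> ?thesis"
    then have "F = {H}" using HF by blast
    then have "card F = 1" by simp
    then show False using Fmod p prime_gt_1_nat by fastforce
  qed
  then obtain T where T: "T \<in> F" "T \<noteq> H" by blast
  have "T \<in> rcosets H" using T(1) unfolding F_def by simp
  then obtain g where g: "g \<in> carrier G" "T = H #> g" using rc by blast
  have gH: "g \<notin> H" using T(2) g coset_join2[OF g(1) H] by blast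
  have "g \<otimes> y \<otimes> inv g \<in> H" if y: "y \<in> H" for y
  proof -
    have iy: "inv y \<in> H" using subgroup.m_inv_closed[OF H y] .
    have yc: "y \<in> carrier G" using y Hc by auto
    have "\<phi> (inv y) T = T" using T iy unfolding F_def by auto
    then have "H #> (g \<otimes> y) = H #> g" using phi[OF iy g(1)] g yc by simp
    moreover have "g \<otimes> y \<in> H #> (g \<otimes> y)" using rcos_self H g yc by simp
    ultimately have "g \<otimes> y \<in> H #> g" by simp
    then obtain k where k: "k \<in> H" "g \<otimes> y = k \<otimes> g" unfolding r_coset_def by blast
    have kc: "k \<in> carrier G" using k Hc by auto
    have "g \<otimes> y \<otimes> inv g = k \<otimes> g \<otimes> inv g" using k by simp
    also have "\<dots> = k" using kc g by (simp add: m_assoc)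
    finally show ?thesis using k by simp
  qed
  then show ?thesis using g gH by blast
qed

end


context group begin

lemma inv_cancel_l: "a \<in> carrier G \<Longrightarrow> b \<in> carrier G \<Longrightarrow> inv a \<otimes> (a \<otimes> b) = b"
  by (simp add: m_assoc[symmetric])

lemma inv_cancel_r: "a \<in> carrier G \<Longrightarrow> b \<in> carrier G \<Longrightarrow> a \<otimes> (inv a \<otimes> b) = b"
  by (simp add: m_assoc[symmetric])

lemma mult_inv_cancel: "u \<in> carrier G \<Longrightarrow> v \<in> carrier G \<Longrightarrow> w \<in> carrier G \<Longrightarrow>
    (u \<otimes> w) \<otimes> inv (v \<otimes> w) = u \<otimes> inv v"
  by (simp add: inv_mult_group m_assoc inv_cancel_r)

lemma comm_as_quot: "a \<in> carrier G \<Longrightarrow> b \<in> carrier G \<Longrightarrow>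
    a \<otimes> b \<otimes> inv a \<otimes> inv b = (a \<otimes> b) \<otimes> inv (b \<otimes> a)"
  by (simp add: inv_mult_group m_assoc)

lemma sub_pow_closed:
  assumes L: "subgroup L G" and x: "x \<in> L" shows "x [^] (n::nat) \<in> L"
proof (induction n)
  case 0 then show ?case using subgroup.one_closed[OF L] by simp
next
  case (Suc n) then show ?case using subgroup.m_closed[OF L Suc x] by simp
qed

lemma cauchy_elem:
  assumes fin: "finite (carrier G)" and q: "Factorial_Ring.prime q" and dvd: "q dvd order G"
  shows "\<exists>x\<in>carrier G. x \<noteq> \<one> \<and> x [^] q = \<one>"
proof -
  obtain m where m: "order G = q ^ 1 * m" using dvd by auto
  obtain P where P: "subgroup P G" "card P = q"
    using sylow_thm[OF q is_group m fin] by auto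
  have "card P > 1" using P q prime_gt_1_nat by simp
  then have "P \<noteq> {\<one>}" by auto
  moreover have "\<one> \<in> P" using subgroup.one_closed[OF P(1)] .
  ultimately obtain y where y: "y \<in> P" "y \<noteq> \<one>" by blast
  interpret GP: group "G\<lparr>carrier := P\<rparr>" using subgroup_imp_group[OF P(1)] .
  have "y [^]\<^bsub>G\<lparr>carrier := P\<rparr>\<^esub> order (G\<lparr>carrier := P\<rparr>) = \<one>\<^bsub>G\<lparr>carrier := P\<rparr>\<^esub>"
    using GP.pow_order_eq_1 y by simp
  then have "y [^] q = \<one>" using P by (simp add: order_def nat_pow_consistent[symmetric])
  moreover have "y \<in> carrier G" using subgroup.mem_carrier[OF P(1) y(1)] .
  ultimately show ?thesis using y by blast
qed

lemma pow_not_surj: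
  assumes fin: "finite (carrier G)" and q: "Factorial_Ring.prime q" and dvd: "q dvd order G"
  shows "{x [^] q | x. x \<in> carrier G} \<noteq> carrier G"
proof
  assume surj: "{x [^] q | x. x \<in> carrier G} = carrier G"
  have "(\<lambda>x. x [^] q) ` carrier G = carrier G" using surj by blast
  then have "inj_on (\<lambda>x. x [^] q) (carrier G)"
    using fin by (simp add: eq_card_imp_inj_on)
  moreover obtain x where x: "x \<in> carrier G" "x \<noteq> \<one>" "x [^] q = \<one>"
    using cauchy_elem[OF fin q dvd] by blast
  ultimately have "x = \<one>" using inj_onD[of "\<lambda>x. x [^] q" "carrier G" x \<one>] by simp
  then show False using x by simp
qed

lemma pow_coprime_mem:
  fixes a b :: nat
  assumes L: "subgroup L G" and y: "y \<in> carrier G" and cop: "coprime a b" and a: "a \<noteq> 0"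
    and ya: "y [^] a \<in> L" and yb: "y [^] b \<in> L"
  shows "y \<in> L"
proof -
  obtain s t where st: "a * s = b * t + gcd a b" using bezout_nat[OF a] by blast
  then have st1: "a * s = b * t + 1" using cop by simp
  have A: "y [^] (a * s) \<in> L" using ya y sub_pow_closed[OF L ya, of s] by (simp add: nat_pow_pow)
  have B: "y [^] (b * t) \<in> L" using yb y sub_pow_closed[OF L yb, of t] by (simp add: nat_pow_pow)
  have "y [^] (a * s) = y [^] (b * t) \<otimes> y" using st1 y by (simp add: nat_pow_mult[symmetric])
  then have "y = inv (y [^] (b * t)) \<otimes> y [^] (a * s)" using y by (simp add: inv_cancel_l)
  then show ?thesis using A B subgroup.m_closed[OF L] subgroup.m_inv_closed[OF L] by metis
qed

lemma pgroup_comm_proper: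
  assumes fin: "finite (carrier G)" and p: "Factorial_Ring.prime p"
    and cardG: "card (carrier G) = p ^ n" and big: "card (carrier G) > 1"
  shows "\<exists>M. subgroup M G \<and> M \<noteq> carrier G \<and>
           (\<forall>a\<in>carrier G. \<forall>b\<in>carrier G. a \<otimes> b \<otimes> inv a \<otimes> inv b \<in> M)"
proof -
  define P where "P = (\<lambda>k. \<exists>M. subgroup M G \<and> M \<noteq> carrier G \<and> card M = k)"
  have ne: "{\<one>} \<noteq> carrier G"
  proof
    assume h: "{\<one>} = carrier G"
    have "card (carrier G) = 1" by (simp add: h[symmetric])
    with big show False by simp
  qed
  have P1: "P 1" unfolding P_def using triv_subgroup ne by (intro exI[of _ "{\<one>}"]) auto
  have bnd: "\<forall>k. P k \<longrightarrow> k \<le> card (carrier G)"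
    unfolding P_def using fin card_mono subgroup.subset by blast
  have "\<exists>k. P k \<and> (\<forall>k'. P k' \<longrightarrow> k' \<le> k)" by (rule Nat.ex_has_greatest_nat[OF P1 bnd])
  then obtain k where k: "P k" "\<forall>k'. P k' \<longrightarrow> k' \<le> k" by blast
  then obtain M where M: "subgroup M G" "M \<noteq> carrier G" "card M = k" unfolding P_def by blast
  have Mc: "M \<subseteq> carrier G" using subgroup.subset[OF M(1)] .
  obtain g where g: "g \<in> carrier G" "g \<notin> M" and gn: "\<forall>y\<in>M. g \<otimes> y \<otimes> inv g \<in> M"
    using normalizer_growth[OF fin p cardG M(1) M(2)] by blast
  have conjpow: "g [^] i \<otimes> y \<otimes> inv (g [^] i) \<in> M" if "y \<in> M" for i :: nat and y
    using that
  proof (induction i arbitrary: y)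
    case 0 then show ?case using Mc by auto
  next
    case (Suc i)
    have yc: "y \<in> carrier G" using Suc.prems Mc by auto
    have "g [^] Suc i \<otimes> y \<otimes> inv (g [^] Suc i) = (g \<otimes> g [^] i) \<otimes> y \<otimes> inv (g \<otimes> g [^] i)"
      by (simp only: nat_pow_Suc2[OF g(1)])
    also have "\<dots> = g \<otimes> (g [^] i \<otimes> y \<otimes> inv (g [^] i)) \<otimes> inv g"
      using g yc by (simp add: inv_mult_group m_assoc)
    finally have "g [^] Suc i \<otimes> y \<otimes> inv (g [^] Suc i) = g \<otimes> (g [^] i \<otimes> y \<otimes> inv (g [^] i)) \<otimes> inv g" .
    then show ?case using gn Suc.IH[OF Suc.prems] by simp
  qed
  define T where "T = {m \<otimes> g [^] (i::nat) | m i. m \<in> M}"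
  have Tc: "T \<subseteq> carrier G" unfolding T_def using Mc g by (auto intro!: m_closed)
  have prod: "(m \<otimes> g [^] i) \<otimes> (m' \<otimes> g [^] j) = (m \<otimes> (g [^] i \<otimes> m' \<otimes> inv (g [^] i))) \<otimes> g [^] (i + j)"
    if "m \<in> carrier G" "m' \<in> carrier G" for m m' and i j :: nat
    using that g by (simp add: nat_pow_mult[symmetric] m_assoc inv_cancel_l)
  have T: "subgroup T G"
  proof (rule fin_subgroupI[OF fin Tc])
    show "\<one> \<in> T" unfolding T_def using subgroup.one_closed[OF M(1)]
      by (intro CollectI exI[of _ \<one>] exI[of _ 0]) simp
    fix x y assume "x \<in> T" "y \<in> T"
    then obtain m i m' j where x: "x = m \<otimes> g [^] (i::nat)" "m \<in> M" and y: "y = m' \<otimes> g [^] (j::nat)" "m' \<in> M"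
      unfolding T_def by blast
    have "m \<otimes> (g [^] i \<otimes> m' \<otimes> inv (g [^] i)) \<in> M"
      using subgroup.m_closed[OF M(1) x(2) conjpow[OF y(2)]] .
    then show "x \<otimes> y \<in> T" unfolding T_def using prod x y Mc by blast
  qed
  have MT: "M \<subseteq> T"
  proof
    fix m assume m: "m \<in> M"
    then have "m = m \<otimes> g [^] (0::nat)" using Mc by auto
    then show "m \<in> T" unfolding T_def using m by blast
  qed
  have gT: "g \<in> T" unfolding T_def using subgroup.one_closed[OF M(1)] g
    by (intro CollectI exI[of _ \<one>] exI[of _ 1]) simp
  have "T = carrier G"
  proof (rule ccontr)
    assume "T \<noteq> carrier G"
    then have "P (card T)" unfolding P_def using T by blast
    then have "card T \<le> card M" using k M by simp
    moreover have "card M < card T"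
      using MT gT g(2) finite_subset[OF Tc fin] by (intro psubset_card_mono) auto
    ultimately show False by simp
  qed
  have "a \<otimes> b \<otimes> inv a \<otimes> inv b \<in> M" if a: "a \<in> carrier G" and b: "b \<in> carrier G" for a b
  proof -
    obtain m i where ma: "a = m \<otimes> g [^] (i::nat)" "m \<in> M" using a \<open>T = carrier G\<close> unfolding T_def by blast
    obtain m' j where mb: "b = m' \<otimes> g [^] (j::nat)" "m' \<in> M" using b \<open>T = carrier G\<close> unfolding T_def by blast
    have mc: "m \<in> carrier G" "m' \<in> carrier G" using ma mb Mc by auto
    define u where "u = m \<otimes> (g [^] i \<otimes> m' \<otimes> inv (g [^] i))"
    define v where "v = m' \<otimes> (g [^] j \<otimes> m \<otimes> inv (g [^] j))"
    have uM: "u \<in> M" unfolding u_def using subgroup.m_closed[OF M(1) ma(2) conjpow[OF mb(2)]] .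
    have vM: "v \<in> M" unfolding v_def using subgroup.m_closed[OF M(1) mb(2) conjpow[OF ma(2)]] .
    have uc: "u \<in> carrier G" "v \<in> carrier G" using uM vM Mc by auto
    have "a \<otimes> b = u \<otimes> g [^] (i + j)" unfolding u_def using prod mc ma mb by simp
    moreover have "b \<otimes> a = v \<otimes> g [^] (i + j)" unfolding v_def using prod mc ma mb by (simp add: add.commute)
    ultimately have "a \<otimes> b \<otimes> inv a \<otimes> inv b = u \<otimes> inv v"
      using comm_as_quot[OF a b] mult_inv_cancel uc g by simp
    then show ?thesis using uM vM subgroup.m_closed[OF M(1)] subgroup.m_inv_closed[OF M(1)] by metis
  qed
  then show ?thesis using M by blast
qed

end


lemma word_eval_pow:
  fixes G (structure)
  assumes "group G" "g 0 \<in> carrier G"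
  shows "word_eval G (replicate n (0, False)) g = g 0 [^]\<^bsub>G\<^esub> n"
proof (induction n)
  case 0 then show ?case by simp
next
  case (Suc n)
  then show ?case using assms monoid.nat_pow_Suc2[OF group.is_monoid[OF assms(1)] assms(2)] by simp
qed

lemma word_image_pow:
  fixes G (structure)
  assumes "group G"
  shows "word_image G 1 (replicate n (0, False)) = {x [^]\<^bsub>G\<^esub> n | x. x \<in> carrier G}"
proof
  show "word_image G 1 (replicate n (0, False)) \<subseteq> {x [^]\<^bsub>G\<^esub> n | x. x \<in> carrier G}"
    unfolding word_image_def using word_eval_pow[OF assms] by fastforce
  show "{x [^]\<^bsub>G\<^esub> n | x. x \<in> carrier G} \<subseteq> word_image G 1 (replicate n (0, False))"
  proof
    fix y assume "y \<in> {x [^]\<^bsub>G\<^esub> n | x. x \<in> carrier G}"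
    then obtain x where x: "x \<in> carrier G" "y = x [^]\<^bsub>G\<^esub> n" by blast
    have "word_eval G (replicate n (0, False)) (\<lambda>_. x) = y" using word_eval_pow[OF assms, of "\<lambda>_. x"] x by simp
    then show "y \<in> word_image G 1 (replicate n (0, False))"
      unfolding word_image_def using x by blast
  qed
qed

lemma word_image_comm:
  fixes G (structure)
  assumes "group G"
  shows "word_image G 2 [(0, False), (1, False), (0, True), (1, True)] = derived_set G (carrier G)"
proof -
  interpret group G by fact
  show ?thesis
  proof
    show "word_image G 2 [(0, False), (1, False), (0, True), (1, True)] \<subseteq> derived_set G (carrier G)"
    proof
      fix y assume "y \<in> word_image G 2 [(0, False), (1, False), (0, True), (1, True)]"
      then obtain g where g: "\<forall>i<2. g i \<in> carrier G"
        and y: "y = word_eval G [(0, False), (1, False), (0, True), (1, True)] g"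
        unfolding word_image_def by blast
      have g0: "g 0 \<in> carrier G" and g1: "g 1 \<in> carrier G" using g by auto
      have "y = g 0 \<otimes> g 1 \<otimes> inv (g 0) \<otimes> inv (g 1)" using y g0 g1 by (simp add: m_assoc)
      then show "y \<in> derived_set G (carrier G)" using g0 g1 by blast
    qed
    show "derived_set G (carrier G) \<subseteq> word_image G 2 [(0, False), (1, False), (0, True), (1, True)]"
    proof
      fix y assume "y \<in> derived_set G (carrier G)"
      then obtain a b where ab: "a \<in> carrier G" "b \<in> carrier G" "y = a \<otimes> b \<otimes> inv a \<otimes> inv b" by blast
      define g where "g = (\<lambda>i::nat. if i = 0 then a else b)"
      have "word_eval G [(0, False), (1, False), (0, True), (1, True)] g = y"
        using ab unfolding g_def by (simp add: m_assoc)
      moreover have "\<forall>i<2. g i \<in> carrier G" using ab unfolding g_def by auto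
      ultimately show "y \<in> word_image G 2 [(0, False), (1, False), (0, True), (1, True)]"
        unfolding word_image_def by blast
    qed
  qed
qed

context group begin

lemma center_sub: "subgroup (center G) G"
proof (rule subgroupI)
  show "center G \<subseteq> carrier G" unfolding center_def by auto
  show "center G \<noteq> {}" unfolding center_def using one_closed by auto
  show "inv a \<in> center G" if a: "a \<in> center G" for a
  proof -
    have ac: "a \<in> carrier G" and comm: "\<forall>x\<in>carrier G. a \<otimes> x = x \<otimes> a" using a unfolding center_def by auto
    have "inv a \<otimes> x = x \<otimes> inv a" if x: "x \<in> carrier G" for x
    proof -
      have "inv a \<otimes> x = inv a \<otimes> (x \<otimes> a) \<otimes> inv a" using ac x by (simp add: m_assoc)
      also have "x \<otimes> a = a \<otimes> x" using comm x by simp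
      also have "inv a \<otimes> (a \<otimes> x) \<otimes> inv a = x \<otimes> inv a" using ac x by (simp add: inv_cancel_l)
      finally show ?thesis .
    qed
    then show ?thesis unfolding center_def using ac by auto
  qed
  show "a \<otimes> b \<in> center G" if ab: "a \<in> center G" "b \<in> center G" for a b
  proof -
    have ac: "a \<in> carrier G" "b \<in> carrier G" and ca: "\<forall>x\<in>carrier G. a \<otimes> x = x \<otimes> a"
      and cb: "\<forall>x\<in>carrier G. b \<otimes> x = x \<otimes> b" using ab unfolding center_def by auto
    have "a \<otimes> b \<otimes> x = x \<otimes> (a \<otimes> b)" if x: "x \<in> carrier G" for x
    proof -
      have "a \<otimes> b \<otimes> x = a \<otimes> (b \<otimes> x)" using ac x by (simp add: m_assoc)
      also have "\<dots> = a \<otimes> (x \<otimes> b)" using cb x by simp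
      also have "\<dots> = (a \<otimes> x) \<otimes> b" using ac x by (simp add: m_assoc)
      also have "\<dots> = (x \<otimes> a) \<otimes> b" using ca x by simp
      also have "\<dots> = x \<otimes> (a \<otimes> b)" using ac x by (simp add: m_assoc)
      finally show ?thesis .
    qed
    then show ?thesis unfolding center_def using ac by auto
  qed
qed

lemma center_comm: "z \<in> center G \<Longrightarrow> x \<in> carrier G \<Longrightarrow> z \<otimes> x = x \<otimes> z"
  unfolding center_def by auto

lemma comm_pow_central:
  assumes a: "a \<in> carrier G" and b: "b \<in> carrier G" and c: "c = a \<otimes> b \<otimes> inv a \<otimes> inv b"
    and cen: "\<And>n x. x \<in> carrier G \<Longrightarrow> c [^] (n::nat) \<otimes> x = x \<otimes> c [^] n"
  shows "a [^] (n::nat) \<otimes> b \<otimes> inv (a [^] n) = c [^] n \<otimes> b"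
proof (induction n)
  case 0 then show ?case using b by simp
next
  case (Suc n)
  have cc: "c \<in> carrier G" using c a b by simp
  have "a [^] Suc n \<otimes> b \<otimes> inv (a [^] Suc n) = (a \<otimes> a [^] n) \<otimes> b \<otimes> inv (a \<otimes> a [^] n)"
    by (simp only: nat_pow_Suc2[OF a])
  also have "\<dots> = a \<otimes> (a [^] n \<otimes> b \<otimes> inv (a [^] n)) \<otimes> inv a"
    using a b by (simp add: inv_mult_group m_assoc)
  also have "\<dots> = a \<otimes> (c [^] n \<otimes> b) \<otimes> inv a" using Suc by simp
  also have "\<dots> = (a \<otimes> c [^] n) \<otimes> b \<otimes> inv a" using a b cc by (simp add: m_assoc)
  also have "\<dots> = (c [^] n \<otimes> a) \<otimes> b \<otimes> inv a" using cen[OF a] by simp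
  also have "\<dots> = c [^] n \<otimes> (a \<otimes> b \<otimes> inv a)" using a b cc by (simp add: m_assoc)
  also have "a \<otimes> b \<otimes> inv a = c \<otimes> b" using c a b by (simp add: m_assoc)
  also have "c [^] n \<otimes> (c \<otimes> b) = c [^] Suc n \<otimes> b" using cc b by (simp add: m_assoc)
  finally show ?case .
qed

lemma prod_pow:
  assumes "m \<in> carrier G" "m' \<in> carrier G" "g \<in> carrier G"
  shows "(m \<otimes> g [^] (i::nat)) \<otimes> (m' \<otimes> g [^] (j::nat)) = (m \<otimes> (g [^] i \<otimes> m' \<otimes> inv (g [^] i))) \<otimes> g [^] (i + j)"
  using assms by (simp add: nat_pow_mult[symmetric] m_assoc inv_cancel_l)

end


context group begin

lemma conj_in_sub:
  assumes dZ: "derived_set G (carrier G) = center G" and K: "subgroup K G" and ZK: "center G \<subseteq> K"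
    and a: "a \<in> carrier G" and u: "u \<in> K"
  shows "a \<otimes> u \<otimes> inv a \<in> K"
proof -
  have uc: "u \<in> carrier G" using subgroup.mem_carrier[OF K u] .
  have "a \<otimes> u \<otimes> inv a \<otimes> inv u \<in> derived_set G (carrier G)" using a uc by blast
  then have c: "a \<otimes> u \<otimes> inv a \<otimes> inv u \<in> K" using dZ ZK by auto
  have "a \<otimes> u \<otimes> inv a = (a \<otimes> u \<otimes> inv a \<otimes> inv u) \<otimes> u" using a uc by (simp add: m_assoc)
  then show ?thesis using subgroup.m_closed[OF K c u] by simp
qed

lemma Z_in_maximal:
  assumes fin: "finite (carrier G)" and dZ: "derived_set G (carrier G) = center G"
    and K: "maximal_subgroup G K"
  shows "center G \<subseteq> K"
proof (rule ccontr)
  assume "\<not> center G \<subseteq> K"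
  then obtain z where z: "z \<in> center G" "z \<notin> K" by blast
  have Ks: "subgroup K G" "\<And>L. subgroup L G \<Longrightarrow> K \<subseteq> L \<Longrightarrow> L = K \<or> L = carrier G"
    using K unfolding maximal_subgroup_def by auto
  have Kc: "K \<subseteq> carrier G" using subgroup.subset[OF Ks(1)] .
  have Zc: "center G \<subseteq> carrier G" using subgroup.subset[OF center_sub] .
  define S where "S = {k \<otimes> c | k c. k \<in> K \<and> c \<in> center G}"
  have Sc: "S \<subseteq> carrier G" unfolding S_def using Kc Zc by (auto intro!: m_closed)
  have prod: "(k \<otimes> c) \<otimes> (k' \<otimes> c') = (k \<otimes> k') \<otimes> (c \<otimes> c')"
    if "k \<in> carrier G" "k' \<in> carrier G" "c \<in> center G" "c' \<in> carrier G" for k k' c c'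
  proof -
    have cc: "c \<in> carrier G" using that Zc by auto
    have "(k \<otimes> c) \<otimes> (k' \<otimes> c') = k \<otimes> (c \<otimes> k') \<otimes> c'" using that cc by (simp add: m_assoc)
    also have "c \<otimes> k' = k' \<otimes> c" using center_comm[OF that(3) that(2)] by simp
    finally show ?thesis using that cc by (simp add: m_assoc)
  qed
  have S: "subgroup S G"
  proof (rule fin_subgroupI[OF fin Sc])
    show "\<one> \<in> S" unfolding S_def using subgroup.one_closed[OF Ks(1)] subgroup.one_closed[OF center_sub]
      by (intro CollectI exI[of _ \<one>]) simp
    fix x y assume "x \<in> S" "y \<in> S"
    then obtain k c k' c' where x: "x = k \<otimes> c" "k \<in> K" "c \<in> center G"
      and y: "y = k' \<otimes> c'" "k' \<in> K" "c' \<in> center G" unfolding S_def by blast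
    have "x \<otimes> y = (k \<otimes> k') \<otimes> (c \<otimes> c')" using prod[of k k' c c'] x y Kc Zc by (simp add: subsetD)
    moreover have "k \<otimes> k' \<in> K" using subgroup.m_closed[OF Ks(1) x(2) y(2)] .
    moreover have "c \<otimes> c' \<in> center G" using subgroup.m_closed[OF center_sub x(3) y(3)] .
    ultimately show "x \<otimes> y \<in> S" unfolding S_def by blast
  qed
  have KS: "K \<subseteq> S"
  proof
    fix k assume k: "k \<in> K"
    then have "k = k \<otimes> \<one>" using Kc by auto
    then show "k \<in> S" unfolding S_def using k subgroup.one_closed[OF center_sub] by blast
  qed
  have zS: "z \<in> S"
  proof -
    have "z = \<one> \<otimes> z" using z Zc by auto
    then show ?thesis unfolding S_def using z subgroup.one_closed[OF Ks(1)] by blast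
  qed
  have "S = carrier G" using Ks(2)[OF S KS] zS z by blast
  have "a \<otimes> b \<otimes> inv a \<otimes> inv b \<in> K" if a: "a \<in> carrier G" and b: "b \<in> carrier G" for a b
  proof -
    obtain k c where ka: "a = k \<otimes> c" "k \<in> K" "c \<in> center G" using a \<open>S = carrier G\<close> unfolding S_def by blast
    obtain k' c' where kb: "b = k' \<otimes> c'" "k' \<in> K" "c' \<in> center G" using b \<open>S = carrier G\<close> unfolding S_def by blast
    have kc: "k \<in> carrier G" "k' \<in> carrier G" "c \<in> carrier G" "c' \<in> carrier G" using ka kb Kc Zc by auto
    have ab: "a \<otimes> b = (k \<otimes> k') \<otimes> (c \<otimes> c')" using prod ka kb kc by simp
    have "b \<otimes> a = (k' \<otimes> k) \<otimes> (c' \<otimes> c)" using prod ka kb kc by simp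
    also have "c' \<otimes> c = c \<otimes> c'" using center_comm[OF kb(3) kc(3)] by simp
    finally have ba: "b \<otimes> a = (k' \<otimes> k) \<otimes> (c \<otimes> c')" .
    have "a \<otimes> b \<otimes> inv a \<otimes> inv b = (k \<otimes> k') \<otimes> inv (k' \<otimes> k)"
      using comm_as_quot[OF a b] ab ba mult_inv_cancel kc by simp
    moreover have "k \<otimes> k' \<in> K" "k' \<otimes> k \<in> K" using subgroup.m_closed[OF Ks(1)] ka kb by auto
    ultimately show ?thesis using subgroup.m_closed[OF Ks(1)] subgroup.m_inv_closed[OF Ks(1)] by metis
  qed
  then have "derived_set G (carrier G) \<subseteq> K" by blast
  then show False using dZ z by blast
qed

lemma avoid_maximal:
  fixes p :: nat
  assumes fin: "finite (carrier G)" and p: "Factorial_Ring.prime p"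
    and dZ: "derived_set G (carrier G) = center G"
    and xpZ: "\<forall>y\<in>carrier G. y [^] p \<in> center G"
    and x: "x \<in> carrier G" "x \<notin> center G"
  shows "\<exists>K. maximal_subgroup G K \<and> x \<notin> K"
proof -
  define Q where "Q = (\<lambda>k. \<exists>K. subgroup K G \<and> center G \<subseteq> K \<and> x \<notin> K \<and> card K = k)"
  have Q1: "Q (card (center G))" unfolding Q_def using center_sub x by blast
  have bnd: "\<forall>k. Q k \<longrightarrow> k \<le> card (carrier G)"
    unfolding Q_def using fin card_mono subgroup.subset by blast
  have "\<exists>k. Q k \<and> (\<forall>k'. Q k' \<longrightarrow> k' \<le> k)" by (rule Nat.ex_has_greatest_nat[OF Q1 bnd])
  then obtain k where k: "Q k" "\<forall>k'. Q k' \<longrightarrow> k' \<le> k" by blast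
  then obtain K where K: "subgroup K G" "center G \<subseteq> K" "x \<notin> K" "card K = k" unfolding Q_def by blast
  have Kc: "K \<subseteq> carrier G" using subgroup.subset[OF K(1)] .
  have factA: "\<exists>u\<in>K. \<exists>j::nat. x = u \<otimes> y [^] j \<and> \<not> p dvd j" if y: "y \<in> carrier G" "y \<notin> K" for y
  proof -
    define S where "S = {u \<otimes> y [^] (i::nat) | u i. u \<in> K}"
    have Sc: "S \<subseteq> carrier G" unfolding S_def using Kc y by (auto intro!: m_closed)
    have S: "subgroup S G"
    proof (rule fin_subgroupI[OF fin Sc])
      show "\<one> \<in> S" unfolding S_def using subgroup.one_closed[OF K(1)]
        by (intro CollectI exI[of _ \<one>] exI[of _ 0]) simp
      fix a b assume "a \<in> S" "b \<in> S"
      then obtain m i m' j where a: "a = m \<otimes> y [^] (i::nat)" "m \<in> K" and b: "b = m' \<otimes> y [^] (j::nat)" "m' \<in> K"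
        unfolding S_def by blast
      have "m \<otimes> (y [^] i \<otimes> m' \<otimes> inv (y [^] i)) \<in> K"
        using subgroup.m_closed[OF K(1) a(2) conj_in_sub[OF dZ K(1) K(2) _ b(2)]] y by simp
      then show "a \<otimes> b \<in> S" unfolding S_def using prod_pow a b Kc y by blast
    qed
    have KS: "K \<subseteq> S"
    proof
      fix m assume m: "m \<in> K"
      then have "m = m \<otimes> y [^] (0::nat)" using Kc by auto
      then show "m \<in> S" unfolding S_def using m by blast
    qed
    have yS: "y \<in> S" unfolding S_def using subgroup.one_closed[OF K(1)] y
      by (intro CollectI exI[of _ \<one>] exI[of _ 1]) simp
    have "x \<in> S"
    proof (rule ccontr)
      assume "x \<notin> S"
      then have "Q (card S)" unfolding Q_def using S KS K(2) by blast
      then have "card S \<le> card K" using k K by simp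
      moreover have "card K < card S"
        using KS yS y(2) finite_subset[OF Sc fin] by (intro psubset_card_mono) auto
      ultimately show False by simp
    qed
    then obtain u j where uj: "x = u \<otimes> y [^] (j::nat)" "u \<in> K" unfolding S_def by blast
    have "\<not> p dvd j"
    proof
      assume "p dvd j"
      then obtain t where t: "j = p * t" by blast
      have "y [^] j = (y [^] p) [^] t" using t y by (simp add: nat_pow_pow)
      moreover have "y [^] p \<in> K" using xpZ y K(2) by auto
      ultimately have "y [^] j \<in> K" using sub_pow_closed[OF K(1)] by simp
      then have "x \<in> K" using uj subgroup.m_closed[OF K(1)] by simp
      then show False using K by simp
    qed
    then show ?thesis using uj by blast
  qed
  have "maximal_subgroup G K"
    unfolding maximal_subgroup_def
  proof (intro conjI allI impI)
    show "subgroup K G" by (rule K(1))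
    show "K \<noteq> carrier G" using K(3) x by blast
    fix L assume L: "subgroup L G \<and> K \<subseteq> L"
    show "L = K \<or> L = carrier G"
    proof (cases "L = K")
      case True then show ?thesis by simp
    next
      case False
      then obtain k0 where k0: "k0 \<in> L" "k0 \<notin> K" using L by blast
      have k0c: "k0 \<in> carrier G" using subgroup.mem_carrier[OF conjunct1[OF L] k0(1)] .
      obtain u i where ui: "u \<in> K" "x = u \<otimes> k0 [^] (i::nat)" using factA[OF k0c k0(2)] by blast
      have "w \<in> L" if w: "w \<in> carrier G" for w
      proof (cases "w \<in> K")
        case True then show ?thesis using L by blast
      next
        case False
        obtain u' j where uj: "u' \<in> K" "x = u' \<otimes> w [^] (j::nat)" "\<not> p dvd j"
          using factA[OF w False] by blast
        have u'c: "u' \<in> carrier G" using uj Kc by auto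
        have "w [^] j = inv u' \<otimes> x" using uj u'c w by (simp add: inv_cancel_l)
        also have "\<dots> = inv u' \<otimes> (u \<otimes> k0 [^] i)" using ui by simp
        finally have wj: "w [^] j \<in> L"
          using L ui uj k0 subgroup.m_closed[OF conjunct1[OF L]] subgroup.m_inv_closed[OF conjunct1[OF L]]
            sub_pow_closed[OF conjunct1[OF L]] by (metis subsetD)
        have wp: "w [^] p \<in> L" using xpZ w K(2) L by blast
        have cop: "coprime p j" using prime_imp_coprime[OF p uj(3)] .
        show ?thesis using pow_coprime_mem[OF conjunct1[OF L] w cop _ wp wj] p prime_gt_0_nat by simp
      qed
      then show ?thesis using L subgroup.subset by blast
    qed
  qed
  then show ?thesis using K by blast
qed

lemma frattini_eq:
  fixes p :: nat
  assumes fin: "finite (carrier G)" and p: "Factorial_Ring.prime p"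
    and dZ: "derived_set G (carrier G) = center G"
    and xpZ: "\<forall>y\<in>carrier G. y [^] p \<in> center G"
  shows "frattini G = center G"
proof
  show "center G \<subseteq> frattini G"
    unfolding frattini_def using Z_in_maximal[OF fin dZ] subgroup.subset[OF center_sub] by blast
  show "frattini G \<subseteq> center G"
  proof
    fix x assume x: "x \<in> frattini G"
    show "x \<in> center G"
    proof (rule ccontr)
      assume "x \<notin> center G"
      moreover have "x \<in> carrier G" using x unfolding frattini_def by blast
      ultimately obtain K where "maximal_subgroup G K" "x \<notin> K"
        using avoid_maximal[OF fin p dZ xpZ] by blast
      then show False using x unfolding frattini_def by blast
    qed
  qed
qed

end


context group begin

lemma main_thm:
  assumes fin: "finite (carrier G)" and nc: "\<not> comm_group G"
    and W: "word_images G = {{\<one>}, center G, carrier G}"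
  shows "\<exists>p. special_p_group G p"
proof -
  have Zc: "center G \<subseteq> carrier G" using subgroup.subset[OF center_sub] .
  have one_Z: "\<one> \<in> center G" using subgroup.one_closed[OF center_sub] .
  have powW: "word_image G 1 (replicate n (0, False)) \<in> word_images G" for n
    unfolding word_images_def letters_below_def
    by (intro CollectI exI[of _ 1] exI[of _ "replicate n (0, False)"]) auto
  have commW: "word_image G 2 [(0, False), (1, False), (0, True), (1, True)] \<in> word_images G"
    unfolding word_images_def letters_below_def
    by (intro CollectI exI[of _ 2] exI[of _ "[(0, False), (1, False), (0, True), (1, True)]"]) auto
  have powimg: "{x [^] n | x. x \<in> carrier G} = {\<one>} \<or> {x [^] n | x. x \<in> carrier G} = center G
      \<or> {x [^] n | x. x \<in> carrier G} = carrier G" for n :: nat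
    using powW[of n] W word_image_pow[OF is_group, of n] by auto
  have C: "derived_set G (carrier G) = {\<one>} \<or> derived_set G (carrier G) = center G
      \<or> derived_set G (carrier G) = carrier G"
    using commW W word_image_comm[OF is_group] by auto
  obtain a b where ab: "a \<in> carrier G" "b \<in> carrier G" "a \<otimes> b \<noteq> b \<otimes> a"
    using nc group_comm_groupI by blast
  have cne: "a \<otimes> b \<otimes> inv a \<otimes> inv b \<noteq> \<one>"
  proof
    assume "a \<otimes> b \<otimes> inv a \<otimes> inv b = \<one>"
    then have "(a \<otimes> b) \<otimes> inv (b \<otimes> a) = \<one>" using comm_as_quot ab by simp
    then have "inv (inv (b \<otimes> a)) = a \<otimes> b" using inv_equality[of "a \<otimes> b" "inv (b \<otimes> a)"] ab by simp
    then show False using ab by simp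
  qed
  have big: "card (carrier G) > 1"
  proof (rule ccontr)
    assume "\<not> ?thesis"
    then have "card (carrier G) \<le> Suc 0" by simp
    then have "a = b" using card_le_Suc0_iff_eq[OF fin] ab by blast
    then show False using ab by simp
  qed
  have powZ: "x [^] q \<in> center G" if q: "Factorial_Ring.prime q" "q dvd card (carrier G)"
    and x: "x \<in> carrier G" for q :: nat and x
  proof -
    define S where "S = {x [^] q | x. x \<in> carrier G}"
    have "S \<noteq> carrier G"
      using pow_not_surj[OF fin q(1)] q(2) unfolding S_def by (simp add: order_def)
    then have S: "S = {\<one>} \<or> S = center G"
      using powimg[of q] unfolding S_def by blast
    have xS: "x [^] q \<in> S" using x unfolding S_def by blast
    show ?thesis
    proof (cases "S = {\<one>}")
      case True then have "x [^] q = \<one>" using xS by simp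
      then show ?thesis using one_Z by simp
    next
      case False then show ?thesis using S xS by simp
    qed
  qed
  obtain p :: nat where p: "Factorial_Ring.prime p" "p dvd card (carrier G)"
    using prime_factor_nat[of "card (carrier G)"] big by auto
  have pgrp: "\<exists>n. card (carrier G) = p ^ n"
  proof -
    obtain y where y: "card (carrier G) = p ^ multiplicity p (card (carrier G)) * y" "\<not> p dvd y"
      by (rule multiplicity_decompose'[where x="card (carrier G)" and p=p]) (use big p(1) not_prime_unit in auto)
    have "y = 1"
    proof (rule ccontr)
      assume "y \<noteq> 1"
      then obtain q :: nat where q: "Factorial_Ring.prime q" "q dvd y" using prime_factor_nat by blast
      have qd: "q dvd card (carrier G)" using q(2) y(1) by (metis dvd_mult)
      have "q \<noteq> p" using q y by blast
      then have cop: "coprime p q" using primes_coprime p q by blast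
      have allZ: "x \<in> center G" if x: "x \<in> carrier G" for x
        using pow_coprime_mem[OF center_sub x cop _ powZ[OF p x] powZ[OF q(1) qd x]] p prime_gt_0_nat
        by simp
      have "comm_group G"
        by (rule group_comm_groupI) (use allZ center_comm in blast)
      then show False using nc by simp
    qed
    then show ?thesis using y by auto
  qed
  have xpZ: "\<forall>y\<in>carrier G. y [^] p \<in> center G" using powZ[OF p] by blast
  obtain n where n: "card (carrier G) = p ^ n" using pgrp by blast
  obtain M where M: "subgroup M G" "M \<noteq> carrier G"
    "\<forall>a\<in>carrier G. \<forall>b\<in>carrier G. a \<otimes> b \<otimes> inv a \<otimes> inv b \<in> M"
    using pgroup_comm_proper[OF fin p(1) n big] by blast
  have CM: "derived_set G (carrier G) \<subseteq> M" using M(3) by blast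
  have "derived_set G (carrier G) \<noteq> carrier G"
    using CM M(2) subgroup.subset[OF M(1)] by blast
  moreover have "derived_set G (carrier G) \<noteq> {\<one>}" using cne ab by blast
  ultimately have dZ: "derived_set G (carrier G) = center G" using C by blast
  have der: "derived G (carrier G) = center G"
  proof
    show "derived G (carrier G) \<subseteq> center G"
      unfolding derived_def dZ by (rule generate_subgroup_incl[OF subset_refl center_sub])
    show "center G \<subseteq> derived G (carrier G)"
      unfolding derived_def dZ by (auto intro: generate.incl)
  qed
  have elem: "elementary_abelian_p G p (center G)"
    unfolding elementary_abelian_p_def
  proof (intro conjI ballI)
    show "subgroup (center G) G" by (rule center_sub)
    show "comm_group (G\<lparr>carrier := center G\<rparr>)"
      by (rule group.group_comm_groupI[OF subgroup_imp_group[OF center_sub]])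
        (use center_comm Zc in auto)
    fix z assume z: "z \<in> center G"
    then obtain a' b' where a'b': "a' \<in> carrier G" "b' \<in> carrier G" "z = a' \<otimes> b' \<otimes> inv a' \<otimes> inv b'"
      using dZ by blast
    have cen: "z [^] (k::nat) \<otimes> x = x \<otimes> z [^] k" if "x \<in> carrier G" for k x
      using center_comm[OF sub_pow_closed[OF center_sub z] that] .
    have e: "a' [^] p \<otimes> b' \<otimes> inv (a' [^] p) = z [^] p \<otimes> b'"
      using comm_pow_central[OF a'b' cen] .
    have "a' [^] p \<otimes> b' = b' \<otimes> a' [^] p" using center_comm[OF _ a'b'(2)] xpZ a'b'(1) by blast
    then have "a' [^] p \<otimes> b' \<otimes> inv (a' [^] p) = b'" using a'b' by (simp add: m_assoc)
    then have "z [^] p \<otimes> b' = b'" using e by simp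
    moreover have "z \<in> carrier G" using z Zc by auto
    ultimately show "z [^] p = \<one>" using a'b'(2) by simp
  qed
  have fr: "frattini G = center G" using frattini_eq[OF fin p(1) dZ xpZ] .
  have "special_p_group G p"
    unfolding special_p_group_def p_group_def
    using p(1) is_group fin pgrp der fr elem by simp
  then show ?thesis by blast
qed

end

theorem theorem5p2:
  fixes G :: "('a, 'b) monoid_scheme"
  assumes "group G"
    and "finite (carrier G)"
    and "\<not> comm_group G"
    and "word_images G = {{\<one>\<^bsub>G\<^esub>}, center G, carrier G}"
  shows "\<exists>p. special_p_group G p"
  using group.main_thm[OF assms] .


end
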